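(* Consider the problem $\min f(x)$ subject to $x\in\mathcal{F}\cap\mathcal{Z}\cap X$, where $\mathcal{F}=\{x:g(x)\le0\}$, and the penalized problem $\min\{P(x;\varepsilon): x\in X\cap\mathcal{Z}\}$ with $P(x;\varepsilon)=f(x)+\frac1\varepsilon\sum_{i=1}^m\max\{0,g_i(x)\}$. Suppose EMFCQ (see context) holds. Then there is $\varepsilon^\star>0$ such that for every $\varepsilon\in(0,\varepsilon^\star]$, every stationary point of the penalized problem is a KKT stationary point of the constrained problem.
   Context: $\{1,\dots,n\}=I^c\cup I^z$, $I^c\cap I^z=\emptyset$; $v_c=(v_i)_{i\in I^c}$, $v_z=(v_i)_{i\in I^z}$. $l,u\in\mathbb{R}^n$ finite, $l_i<u_i$, $l_i,u_i\in\mathbb{Z}$ for $i\in I^z$; $X=\{x:l\le x\le u\}$, $\mathcal{Z}=\{x: x_i\in\mathbb{Z}\ \forall i\in I^z\}$. $f$ and $g=(g_1,\dots,g_m)$ are Lipschitz continuous w.r.t. the continuous variables: $|h(x)-h(y)|\le L\|x-y\|$ for $h\in\{f,g_1,\dots,g_m\}$ whenever $x_z=y_z$. A vector in $\mathbb{Z}^p$ is primitive if the gcd of its components is 1. For $x\in X\cap\mathcal{Z}$: $D^z(x)=\{d\in\mathbb{Z}^n: d_i=0\ (i\in I^c),\ d_z\text{ primitive},\ x+d\in X\cap\mathcal{Z}\}$, $\mathcal{B}^z(x)=\{x+d: d\in D^z(x)\}$, $D^c(x)=\{s: s_i=0\ (i\in I^z),\ s_i\ge0 \text{ if } i\in I^c,x_i=l_i,\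 s_i\le0\text{ if } i\in I^c,x_i=u_i\}$. For $h$ Lipschitz w.r.t. continuous variables and $s$ with $s_z=0$: $h^{Cl}_{x_c}(x;s)=\limsup_{y_c\to x_c,\,y_z=x_z,\,t\downarrow0}\frac{h(y+ts)-h(y)}{t}$, $\partial_c h(x)=\{v: v_z=0,\ h^{Cl}_{x_c}(x;s)\ge s^\top v\ \forall s \text{ with } s_z=0\}$. Clarke–Jahn derivative: for $x\in X\cap\mathcal{Z}$, $s\in D^c(x)$, $P^\circ_c(x;\varepsilon,s)=\limsup\frac{P(y+ts;\varepsilon)-P(y;\varepsilon)}{t}$ as $y_c\to x_c$, $t\downarrow0$ with $y_z=x_z$, $y\in X\cap\mathcal{Z}$, $y+ts\in X\cap\mathcal{Z}$. A stationary point of the penalized problem is $x\in X\cap\mathcal{Z}$ with $P^\circ_c(x;\varepsilon,s)\ge0$ for all $s\in D^c(x)$ and $P(x;\varepsilon)\le P(y;\varepsilon)$ for all $y\in\mathcal{B}^z(x)$. KKT stationary point of the constrained problem: $x^*\in\mathcal{F}\cap\mathcal{Z}\cap X$ for which there is $\lambda\in\mathbb{R}^m$ with $\lambda\ge0$, $\lambda^\top g(x^* )=0$, $\max\{\xi^\top s: \xi\in\partial_c f(x^* )+\sum_{i=1}^m\lambda_i\partial_c g_i(x^* )\}\ge0$ for every $s\in D^c(x^* )$, and $f(x^* )\le f(x)$ for all $x\in\mathcal{B}^z(x^* )\cap\mathcal{F}$. EMFCQ: for every $x\in(X\cap\mathcal{Z})\setminus\operatorname{int}\mathcal{F}$, either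 (i) there is $s\in D^c(x)$ with $\xi^\top s<0$ for all $\xi\in\partial_c g_i(x)$ and all $i$ with $g_i(x)\ge0$; or (ii) there is $\bar d\in D^z(x)$ with $\sum_{i}\max\{0,g_i(x+\bar d)\}<\sum_{i}\max\{0,g_i(x)\}$. *)

theory Defs
  imports "HOL-Analysis.Analysis"
begin

text \<open>Variables live in real^'n; Iz is the set of integer indices, the continuous
  indices are the complement UNIV - Iz.\<close>

definition boxX :: "real^'n \<Rightarrow> real^'n \<Rightarrow> (real^'n) set" where
  "boxX l u = {x. \<forall>i. l$i \<le> x$i \<and> x$i \<le> u$i}"

definition intset :: "'n set \<Rightarrow> (real^'n) set" where
  "intset Iz = {x. \<forall>i\<in>Iz. x$i \<in> \<int>}"

definition same_int_part :: "'n set \<Rightarrow> real^'n \<Rightarrow> real^'n \<Rightarrow> bool" where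
  "same_int_part Iz x y \<longleftrightarrow> (\<forall>i\<in>Iz. x$i = y$i)"

definition primitive_on :: "'n set \<Rightarrow> real^'n \<Rightarrow> bool" where
  "primitive_on Iz d \<longleftrightarrow> (\<forall>i\<in>Iz. d$i \<in> \<int>) \<and> Gcd ((\<lambda>i. \<lfloor>d$i\<rfloor>) ` Iz) = (1::int)"

definition Dz :: "'n set \<Rightarrow> real^'n \<Rightarrow> real^'n \<Rightarrow> real^'n \<Rightarrow> (real^'n) set" where
  "Dz Iz l u x = {d. (\<forall>i. d$i \<in> \<int>) \<and> (\<forall>i\<in>UNIV - Iz. d$i = 0) \<and> primitive_on Iz d
                    \<and> x + d \<in> boxX l u \<inter> intset Iz}"

definition Bz :: "'n set \<Rightarrow> real^'n \<Rightarrow> real^'n \<Rightarrow> real^'n \<Rightarrow> (real^'n) set" where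
  "Bz Iz l u x = (\<lambda>d. x + d) ` Dz Iz l u x"

definition Dc :: "'n set \<Rightarrow> real^'n \<Rightarrow> real^'n \<Rightarrow> real^'n \<Rightarrow> (real^'n) set" where
  "Dc Iz l u x = {s. (\<forall>i\<in>Iz. s$i = 0)
                    \<and> (\<forall>i\<in>UNIV - Iz. x$i = l$i \<longrightarrow> s$i \<ge> 0)
                    \<and> (\<forall>i\<in>UNIV - Iz. x$i = u$i \<longrightarrow> s$i \<le> 0)}"

definition clarke_c :: "'n set \<Rightarrow> (real^'n \<Rightarrow> real) \<Rightarrow> real^'n \<Rightarrow> real^'n \<Rightarrow> ereal" where
  "clarke_c Iz h x s =
     Limsup ((inf (nhds x) (principal {y. same_int_part Iz y x})) \<times>\<^sub>F at_right (0::real))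
            (\<lambda>(y,t). ereal ((h (y + t *\<^sub>R s) - h y) / t))"

definition subdiff_c :: "'n set \<Rightarrow> (real^'n \<Rightarrow> real) \<Rightarrow> real^'n \<Rightarrow> (real^'n) set" where
  "subdiff_c Iz h x = {v. (\<forall>i\<in>Iz. v$i = 0) \<and>
      (\<forall>s. (\<forall>i\<in>Iz. s$i = 0) \<longrightarrow> clarke_c Iz h x s \<ge> ereal (s \<bullet> v))}"

definition penalty :: "(real^'n \<Rightarrow> real) \<Rightarrow> (nat \<Rightarrow> real^'n \<Rightarrow> real) \<Rightarrow> nat \<Rightarrow> real \<Rightarrow> real^'n \<Rightarrow> real" where
  "penalty f g m \<epsilon> x = f x + (1 / \<epsilon>) * (\<Sum>i=1..m. max 0 (g i x))"

definition clarke_jahn :: "'n set \<Rightarrow> real^'n \<Rightarrow> real^'n \<Rightarrow> (real^'n \<Rightarrow> real) \<Rightarrow> real^'n \<Rightarrow> real^'n \<Rightarrow> ereal" where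
  "clarke_jahn Iz l u P x s =
     Limsup (inf ((inf (nhds x) (principal {y. same_int_part Iz y x})) \<times>\<^sub>F at_right (0::real))
                 (principal {(y,t). y \<in> boxX l u \<inter> intset Iz \<and> y + t *\<^sub>R s \<in> boxX l u \<inter> intset Iz}))
            (\<lambda>(y,t). ereal ((P (y + t *\<^sub>R s) - P y) / t))"

definition stationary_pen :: "'n set \<Rightarrow> real^'n \<Rightarrow> real^'n \<Rightarrow> (real^'n \<Rightarrow> real) \<Rightarrow> (nat \<Rightarrow> real^'n \<Rightarrow> real) \<Rightarrow> nat \<Rightarrow> real \<Rightarrow> real^'n \<Rightarrow> bool" where
  "stationary_pen Iz l u f g m \<epsilon> x \<longleftrightarrow>
     x \<in> boxX l u \<inter> intset Iz \<and>
     (\<forall>s\<in>Dc Iz l u x. clarke_jahn Iz l u (penalty f g m \<epsilon>) x s \<ge> 0) \<and>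
     (\<forall>y\<in>Bz Iz l u x. penalty f g m \<epsilon> x \<le> penalty f g m \<epsilon> y)"

definition feasF :: "(nat \<Rightarrow> real^'n \<Rightarrow> real) \<Rightarrow> nat \<Rightarrow> (real^'n) set" where
  "feasF g m = {x. \<forall>i\<in>{1..m}. g i x \<le> 0}"

definition kkt_point :: "'n set \<Rightarrow> real^'n \<Rightarrow> real^'n \<Rightarrow> (real^'n \<Rightarrow> real) \<Rightarrow> (nat \<Rightarrow> real^'n \<Rightarrow> real) \<Rightarrow> nat \<Rightarrow> real^'n \<Rightarrow> bool" where
  "kkt_point Iz l u f g m x \<longleftrightarrow>
     x \<in> feasF g m \<inter> intset Iz \<inter> boxX l u \<and>
     (\<exists>lam::nat \<Rightarrow> real. (\<forall>i\<in>{1..m}. lam i \<ge> 0) \<and> (\<Sum>i=1..m. lam i * g i x) = 0 \<and>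
        (\<forall>s\<in>Dc Iz l u x. \<exists>\<xi>0\<in>subdiff_c Iz f x. \<exists>\<xi>::nat \<Rightarrow> real^'n.
            (\<forall>i\<in>{1..m}. \<xi> i \<in> subdiff_c Iz (g i) x) \<and>
            (\<xi>0 + (\<Sum>i=1..m. lam i *\<^sub>R \<xi> i)) \<bullet> s \<ge> 0)) \<and>
     (\<forall>y\<in>Bz Iz l u x \<inter> feasF g m. f x \<le> f y)"

definition EMFCQ :: "'n set \<Rightarrow> real^'n \<Rightarrow> real^'n \<Rightarrow> (nat \<Rightarrow> real^'n \<Rightarrow> real) \<Rightarrow> nat \<Rightarrow> bool" where
  "EMFCQ Iz l u g m \<longleftrightarrow>
     (\<forall>x\<in>(boxX l u \<inter> intset Iz) - interior (feasF g m).
        (\<exists>s\<in>Dc Iz l u x. \<forall>i\<in>{1..m}. g i x \<ge> 0 \<longrightarrow> (\<forall>\<xi>\<in>subdiff_c Iz (g i) x. \<xi> \<bullet> s < 0)) \<or>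
        (\<exists>d\<in>Dz Iz l u x. (\<Sum>i=1..m. max 0 (g i (x + d))) < (\<Sum>i=1..m. max 0 (g i x))))"

end

theory Submission imports Defs begin

definition CF :: "'n::finite set \<Rightarrow> real^'n \<Rightarrow> ((real^'n) \<times> real) filter" where
  "CF Iz x = inf (nhds x) (principal {y. same_int_part Iz y x}) \<times>\<^sub>F at_right 0"

lemma ev_CF:
  "eventually P (CF Iz x) \<longleftrightarrow>
   (\<exists>\<delta>>0. \<forall>y t. same_int_part Iz y x \<longrightarrow> dist y x < \<delta> \<longrightarrow> 0 < t \<longrightarrow> t < \<delta> \<longrightarrow> P (y,t))"
proof
  assume "eventually P (CF Iz x)"
  then obtain Pf Pg where pf: "eventually Pf (inf (nhds x) (principal {y. same_int_part Iz y x}))"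
     and pg: "eventually Pg (at_right (0::real))" and pp: "\<forall>y t. Pf y \<longrightarrow> Pg t \<longrightarrow> P (y,t)"
    unfolding CF_def eventually_prod_filter by blast
  from pf obtain e where e: "e > 0" "\<forall>y. dist y x < e \<longrightarrow> same_int_part Iz y x \<longrightarrow> Pf y"
    unfolding eventually_inf_principal eventually_nhds_metric by auto
  from pg obtain b where b: "b > 0" "\<forall>t>0. t < b \<longrightarrow> Pg t"
    unfolding eventually_at_right_field by auto
  show "\<exists>\<delta>>0. \<forall>y t. same_int_part Iz y x \<longrightarrow> dist y x < \<delta> \<longrightarrow> 0 < t \<longrightarrow> t < \<delta> \<longrightarrow> P (y,t)"
    using e b pp by (intro exI[of _ "min e b"]) auto
next
  assume "\<exists>\<delta>>0. \<forall>y t. same_int_part Iz y x \<longrightarrow> dist y x < \<delta> \<longrightarrow> 0 < t \<longrightarrow> t < \<delta> \<longrightarrow> P (y,t)"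
  then obtain d where d: "d > 0" "\<forall>y t. same_int_part Iz y x \<longrightarrow> dist y x < d \<longrightarrow> 0 < t \<longrightarrow> t < d \<longrightarrow> P (y,t)"
    by blast
  have 1: "eventually (\<lambda>y. same_int_part Iz y x \<and> dist y x < d) (inf (nhds x) (principal {y. same_int_part Iz y x}))"
    unfolding eventually_inf_principal eventually_nhds_metric using d by auto
  have 2: "eventually (\<lambda>t. 0 < t \<and> t < d) (at_right (0::real))"
    unfolding eventually_at_right_field using d by auto
  show "eventually P (CF Iz x)"
    unfolding CF_def eventually_prod_filter using 1 2 d by blast
qed

lemma CF_nontriv: "CF Iz x \<noteq> bot"
proof
  assume "CF Iz x = bot"
  then have "eventually (\<lambda>_. False) (CF Iz x)" by simp
  then obtain d where "d > 0" "\<forall>y t. same_int_part Iz y x \<longrightarrow> dist y x < d \<longrightarrow> 0 < t \<longrightarrow> t < d \<longrightarrow> False"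
    unfolding ev_CF by blast
  then have "\<forall>t>0. \<not> t < d" by (auto simp: same_int_part_def dest: spec[of _ x])
  moreover have "d/2 > 0" "d/2 < d" using \<open>d > 0\<close> by simp_all
  ultimately show False by blast
qed

definition Vc :: "'n::finite set \<Rightarrow> (real^'n) set" where
  "Vc Iz = {s. \<forall>i\<in>Iz. s$i = 0}"

definition lipc :: "'n::finite set \<Rightarrow> (real^'n \<Rightarrow> real) \<Rightarrow> real \<Rightarrow> bool" where
  "lipc Iz h L \<longleftrightarrow> (\<forall>x y. same_int_part Iz x y \<longrightarrow> \<bar>h x - h y\<bar> \<le> L * norm (x - y))"

definition pc :: "'n::finite set \<Rightarrow> (real^'n \<Rightarrow> real) \<Rightarrow> real^'n \<Rightarrow> real^'n \<Rightarrow> real" where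
  "pc Iz h x s = real_of_ereal (clarke_c Iz h x s)"

lemma clarke_CF: "clarke_c Iz h x s = Limsup (CF Iz x) (\<lambda>(y,t). ereal ((h (y + t *\<^sub>R s) - h y) / t))"
  by (simp add: clarke_c_def CF_def)

lemma same_shift: "s \<in> Vc Iz \<Longrightarrow> same_int_part Iz (y + t *\<^sub>R s) y"
  by (simp add: same_int_part_def Vc_def)

lemma same_sym: "same_int_part Iz x y \<Longrightarrow> same_int_part Iz y x"
  by (simp add: same_int_part_def)

lemma same_trans: "same_int_part Iz x y \<Longrightarrow> same_int_part Iz y z \<Longrightarrow> same_int_part Iz x z"
  by (simp add: same_int_part_def)

lemma q_bound:
  assumes "lipc Iz h L" "s \<in> Vc Iz" "t > 0"
  shows "\<bar>(h (y + t *\<^sub>R s) - h y) / t\<bar> \<le> L * norm s"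
proof -
  have "\<bar>h (y + t *\<^sub>R s) - h y\<bar> \<le> L * norm (y + t *\<^sub>R s - y)"
    using assms(1) same_shift[OF assms(2)] unfolding lipc_def by blast
  also have "\<dots> = (L * norm s) * t" using assms(3) by simp
  finally have "\<bar>h (y + t *\<^sub>R s) - h y\<bar> \<le> (L * norm s) * t" .
  then have "\<bar>h (y + t *\<^sub>R s) - h y\<bar> / t \<le> L * norm s"
    using assms(3) by (subst pos_divide_le_eq) auto
  then show ?thesis using assms(3) by simp
qed

lemma q_bound2:
  assumes "lipc Iz h L" "s \<in> Vc Iz" "t > 0"
  shows "(h (y + t *\<^sub>R s) - h y) / t \<le> L * norm s \<and> - (L * norm s) \<le> (h (y + t *\<^sub>R s) - h y) / t"
  using q_bound[OF assms, of y] unfolding abs_le_iff by linarith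

lemma clarke_finite:
  assumes "lipc Iz h L" "s \<in> Vc Iz"
  shows "clarke_c Iz h x s = ereal (pc Iz h x s)" "\<bar>pc Iz h x s\<bar> \<le> L * norm s"
proof -
  have ev: "eventually (\<lambda>yt. (h (fst yt + snd yt *\<^sub>R s) - h (fst yt)) / snd yt \<le> L * norm s \<and>
      - (L * norm s) \<le> (h (fst yt + snd yt *\<^sub>R s) - h (fst yt)) / snd yt) (CF Iz x)"
    unfolding ev_CF using q_bound2[OF assms] by (intro exI[of _ 1]) simp
  have up: "clarke_c Iz h x s \<le> ereal (L * norm s)"
    unfolding clarke_CF 
    by (rule Limsup_bounded) (rule eventually_mono[OF ev], auto simp: case_prod_beta)
  have lo: "ereal (- (L * norm s)) \<le> clarke_c Iz h x s"
    unfolding clarke_CF 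
    by (rule le_Limsup[OF CF_nontriv]) (rule eventually_mono[OF ev], auto simp: case_prod_beta)
  from up lo show "clarke_c Iz h x s = ereal (pc Iz h x s)"
    unfolding pc_def by (cases "clarke_c Iz h x s") auto
  with up lo show "\<bar>pc Iz h x s\<bar> \<le> L * norm s" by auto
qed

definition qq :: "(real^'n \<Rightarrow> real) \<Rightarrow> real^'n \<Rightarrow> ((real^'n) \<times> real) \<Rightarrow> real" where
  "qq h s yt = (h (fst yt + snd yt *\<^sub>R s) - h (fst yt)) / snd yt"

lemma qq_simp[simp]: "qq h s (y,t) = (h (y + t *\<^sub>R s) - h y) / t"
  by (simp add: qq_def)

lemma clarke_qq: "clarke_c Iz h x s = Limsup (CF Iz x) (\<lambda>yt. ereal (qq h s yt))"
  unfolding clarke_CF qq_def by (rule arg_cong[of _ _ "Limsup (CF Iz x)"]) (simp add: fun_eq_iff)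

lemma pc_ev:
  assumes "lipc Iz h L" "s \<in> Vc Iz" "pc Iz h x s < b"
  shows "eventually (\<lambda>yt. qq h s yt < b) (CF Iz x)"
proof -
  have "Limsup (CF Iz x) (\<lambda>yt. ereal (qq h s yt)) < ereal b"
    using clarke_finite(1)[OF assms(1,2), of x] assms(3) by (simp add: clarke_qq)
  from Limsup_lessD[OF this] show ?thesis by simp
qed

lemma pc_le:
  assumes "lipc Iz h L" "s \<in> Vc Iz"
    and "\<And>e. e > 0 \<Longrightarrow> eventually (\<lambda>yt. qq h s yt \<le> a + e) (CF Iz x)"
  shows "pc Iz h x s \<le> a"
proof -
  have "clarke_c Iz h x s \<le> ereal a"
  proof (rule ereal_le_epsilon2)
    fix e :: real assume "0 < e"
    show "clarke_c Iz h x s \<le> ereal a + ereal e"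
      unfolding clarke_qq by (rule Limsup_bounded) (rule eventually_mono[OF assms(3)[OF \<open>0 < e\<close>]], simp)
  qed
  then show ?thesis using clarke_finite(1)[OF assms(1,2), of x] by simp
qed

lemma Vc_add: "s1 \<in> Vc Iz \<Longrightarrow> s2 \<in> Vc Iz \<Longrightarrow> s1 + s2 \<in> Vc Iz"
  by (simp add: Vc_def)
lemma Vc_scale: "s \<in> Vc Iz \<Longrightarrow> a *\<^sub>R s \<in> Vc Iz"
  by (simp add: Vc_def)

lemma pc_add:
  assumes L: "lipc Iz h L" and s: "s1 \<in> Vc Iz" "s2 \<in> Vc Iz"
  shows "pc Iz h x (s1 + s2) \<le> pc Iz h x s1 + pc Iz h x s2"
proof (rule pc_le[OF L Vc_add[OF s]])
  fix e :: real assume e: "e > 0"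
  have "eventually (\<lambda>yt. qq h s1 yt < pc Iz h x s1 + e/2) (CF Iz x)"
    by (rule pc_ev[OF L s(1)]) (use e in simp)
  then obtain d1 where d1: "d1 > 0" "\<And>y t. same_int_part Iz y x \<Longrightarrow> dist y x < d1 \<Longrightarrow> 0 < t \<Longrightarrow> t < d1 \<Longrightarrow>
      (h (y + t *\<^sub>R s1) - h y) / t < pc Iz h x s1 + e/2"
    unfolding ev_CF by auto
  have "eventually (\<lambda>yt. qq h s2 yt < pc Iz h x s2 + e/2) (CF Iz x)"
    by (rule pc_ev[OF L s(2)]) (use e in simp)
  then obtain d2 where d2: "d2 > 0" "\<And>y t. same_int_part Iz y x \<Longrightarrow> dist y x < d2 \<Longrightarrow> 0 < t \<Longrightarrow> t < d2 \<Longrightarrow>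
      (h (y + t *\<^sub>R s2) - h y) / t < pc Iz h x s2 + e/2"
    unfolding ev_CF by auto
  define d where "d = min d1 (min (d2/2) (d2 / (2 * (norm s1 + 1))))"
  have "0 < d2 / (2 * (norm s1 + 1))" using d2(1) norm_ge_zero[of s1] by (smt (verit) divide_pos_pos)
  then have dpos: "d > 0" using d1 d2 by (simp add: d_def)
  show "eventually (\<lambda>yt. qq h (s1 + s2) yt \<le> pc Iz h x s1 + pc Iz h x s2 + e) (CF Iz x)"
    unfolding ev_CF
  proof (intro exI[of _ d] conjI allI impI dpos)
    fix y t assume y: "same_int_part Iz y x" "dist y x < d" "0 < t" "t < d"
    define y' where "y' = y + t *\<^sub>R s1"
    have sy': "same_int_part Iz y' x" unfolding y'_def using same_shift[OF s(1)] y(1) same_trans by blast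
    have "t * norm s1 \<le> t * (norm s1 + 1)" using y(3) by simp
    also have "\<dots> < d2/2"
    proof -
      have "t < d2 / (2 * (norm s1 + 1))" using y(4) by (simp add: d_def)
      moreover have pos: "0 < 2 * (norm s1 + 1)" using norm_ge_zero[of s1] by (smt (verit))
      ultimately have "t * (2 * (norm s1 + 1)) < d2" using pos_less_divide_eq[OF pos] by blast
      then show ?thesis by (simp add: algebra_simps)
    qed
    finally have ts: "t * norm s1 < d2/2" .
    have "dist y' x \<le> dist y x + dist y' y" by (metis dist_commute dist_triangle add.commute)
    also have "dist y' y = t * norm s1" using y(3) by (simp add: y'_def dist_norm)
    finally have dy': "dist y' x < d2" using y(2) ts by (simp add: d_def)
    have q1: "(h y' - h y) / t < pc Iz h x s1 + e/2"
      using d1(2)[OF y(1)] y by (simp add: d_def y'_def)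
    have q2: "(h (y' + t *\<^sub>R s2) - h y') / t < pc Iz h x s2 + e/2"
    proof (rule d2(2)[OF sy' dy' y(3)])
      have "t < d2/2" using y(4) by (simp add: d_def)
      then show "t < d2" using d2(1) by linarith
    qed
    have eq: "y + t *\<^sub>R (s1 + s2) = y' + t *\<^sub>R s2" by (simp add: y'_def scaleR_add_right add.assoc)
    have "qq h (s1 + s2) (y,t) = (h (y' + t *\<^sub>R s2) - h y') / t + (h y' - h y) / t"
      by (simp add: eq diff_divide_distrib)
    then show "qq h (s1 + s2) (y,t) \<le> pc Iz h x s1 + pc Iz h x s2 + e" using q1 q2 by simp
  qed
qed

lemma pc_scale_le:
  assumes L: "lipc Iz h L" and s: "s \<in> Vc Iz" and a: "a > 0"
  shows "pc Iz h x (a *\<^sub>R s) \<le> a * pc Iz h x s"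
proof (rule pc_le[OF L Vc_scale[OF s]])
  fix e :: real assume e: "e > 0"
  have "eventually (\<lambda>yt. qq h s yt < pc Iz h x s + e/a) (CF Iz x)"
    by (rule pc_ev[OF L s]) (use e a in simp)
  then obtain d1 where d1: "d1 > 0" "\<And>y t. same_int_part Iz y x \<Longrightarrow> dist y x < d1 \<Longrightarrow> 0 < t \<Longrightarrow> t < d1 \<Longrightarrow>
      (h (y + t *\<^sub>R s) - h y) / t < pc Iz h x s + e/a"
    unfolding ev_CF by auto
  define d where "d = min d1 (d1 / a)"
  have dpos: "d > 0" using d1 a by (simp add: d_def)
  show "eventually (\<lambda>yt. qq h (a *\<^sub>R s) yt \<le> a * pc Iz h x s + e) (CF Iz x)"
    unfolding ev_CF
  proof (intro exI[of _ d] conjI allI impI dpos)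
    fix y t assume y: "same_int_part Iz y x" "dist y x < d" "0 < t" "t < d"
    have "a * t < d1" using y(4) a by (simp add: d_def pos_less_divide_eq mult.commute)
    then have q: "(h (y + (a * t) *\<^sub>R s) - h y) / (a * t) < pc Iz h x s + e/a"
      using d1(2)[OF y(1)] y a by (simp add: d_def)
    have "qq h (a *\<^sub>R s) (y,t) = a * ((h (y + (a * t) *\<^sub>R s) - h y) / (a * t))"
      using a y(3) by (simp add: mult.commute)
    also have "\<dots> < a * (pc Iz h x s + e/a)" by (rule mult_strict_left_mono[OF q a])
    also have "\<dots> = a * pc Iz h x s + e" using a by (simp add: distrib_left)
    finally show "qq h (a *\<^sub>R s) (y,t) \<le> a * pc Iz h x s + e" by simp
  qed
qed

lemma pc_scale:
  assumes L: "lipc Iz h L" and s: "s \<in> Vc Iz" and a: "a > 0"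
  shows "pc Iz h x (a *\<^sub>R s) = a * pc Iz h x s"
proof -
  have "pc Iz h x s = pc Iz h x ((1/a) *\<^sub>R (a *\<^sub>R s))" using a by simp
  also have "\<dots> \<le> (1/a) * pc Iz h x (a *\<^sub>R s)" by (rule pc_scale_le[OF L Vc_scale[OF s]]) (use a in simp)
  finally have "a * pc Iz h x s \<le> pc Iz h x (a *\<^sub>R s)" using a by (simp add: field_simps)
  with pc_scale_le[OF L s a, of x] show ?thesis by linarith
qed

lemma pc_zero: "lipc Iz h L \<Longrightarrow> pc Iz h x 0 = 0"
  using pc_scale[of Iz h L 0 2 x] by (simp add: Vc_def)

lemma sublin_support:
  fixes p :: "'a::euclidean_space \<Rightarrow> real"
  assumes add: "\<And>s1 s2. p (s1 + s2) \<le> p s1 + p s2"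
    and hom: "\<And>a s. a > 0 \<Longrightarrow> p (a *\<^sub>R s) = a * p s"
  shows "\<exists>v. (\<forall>s. inner v s \<le> p s) \<and> inner v s0 = p s0"
proof -
  have p0: "p 0 = 0" using hom[of 2 0] by simp
  have hom0: "p (a *\<^sub>R s) \<le> a * p s" if "a \<ge> 0" for a s
    using that hom[of a s] p0 by (cases "a = 0") auto
  define S where "S = {z :: 'a \<times> real. snd z > p (fst z)}"
  define T where "T = (\<lambda>t. (t *\<^sub>R s0, t * p s0)) ` {0..}"
  have cS: "convex S" unfolding convex_def
  proof (intro ballI allI impI)
    fix z1 z2 :: "'a \<times> real" and u v :: real
    assume z: "z1 \<in> S" "z2 \<in> S" and uv: "0 \<le> u" "0 \<le> v" "u + v = 1"
    have "p (fst (u *\<^sub>R z1 + v *\<^sub>R z2)) \<le> p (u *\<^sub>R fst z1) + p (v *\<^sub>R fst z2)" using add by simp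
    also have "\<dots> \<le> u * p (fst z1) + v * p (fst z2)" using hom0 uv by (meson add_mono)
    also have "\<dots> < u * snd z1 + v * snd z2"
    proof (cases "u = 0")
      case True then show ?thesis using uv z by (simp add: S_def)
    next
      case False
      then have "u * p (fst z1) < u * snd z1" using uv z by (simp add: S_def)
      moreover have "v * p (fst z2) \<le> v * snd z2" using uv z by (intro mult_left_mono) (auto simp: S_def)
      ultimately show ?thesis by linarith
    qed
    finally show "u *\<^sub>R z1 + v *\<^sub>R z2 \<in> S" by (simp add: S_def)
  qed
  have cT: "convex T" unfolding T_def
    by (rule convex_linear_image) (auto intro!: linearI simp: algebra_simps)
  have "(0, 1) \<in> S" using p0 by (simp add: S_def)
  then have SnE: "S \<noteq> {}" by blast
  have TnE: "T \<noteq> {}" by (auto simp: T_def)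
  have disj: "S \<inter> T = {}"
  proof -
    { fix t :: real assume "t \<ge> 0"
      then have "p (t *\<^sub>R s0) = t * p s0" using hom[of t s0] p0 by (cases "t = 0") auto }
    then show ?thesis by (auto simp: S_def T_def)
  qed
  obtain a b where ab: "a \<noteq> 0" "\<forall>z\<in>S. inner a z \<le> b" "\<forall>z\<in>T. inner a z \<ge> b"
    using separating_hyperplane_sets[OF cS cT SnE TnE disj] by blast
  obtain w \<beta> where a: "a = (w, \<beta>)" by (cases a)
  have b0: "b \<le> 0" using ab(3) by (force simp: T_def a)
  have Sin: "inner w s + \<beta> * r \<le> b" if "r > p s" for s r
    using ab(2) that by (auto simp: S_def a)
  have beta: "\<beta> < 0"
  proof (rule ccontr)
    assume "\<not> \<beta> < 0"
    have "\<beta> \<le> b" using Sin[of 0 1] p0 by simp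
    with b0 \<open>\<not> \<beta> < 0\<close> have "\<beta> = 0" by linarith
    then have "inner w w \<le> 0" using Sin[of w "p w + 1"] b0 by simp
    then have "w = 0" by (metis inner_gt_zero_iff not_le)
    with \<open>\<beta> = 0\<close> ab(1) a show False by (simp add: zero_prod_def)
  qed
  define v where "v = (- 1 / \<beta>) *\<^sub>R w"
  have vle: "inner v s \<le> p s" for s
  proof (rule ccontr)
    assume "\<not> inner v s \<le> p s"
    define r where "r = (inner v s + p s) / 2"
    have r: "r > p s" "r < inner v s" using \<open>\<not> inner v s \<le> p s\<close> by (simp_all add: r_def)
    have "inner w s + \<beta> * r \<le> 0" using Sin[OF r(1)] b0 by linarith
    then have "inner w s \<le> - \<beta> * r" by linarith
    moreover have nb: "- \<beta> > 0" using beta by simp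
    ultimately have "inner w s / (- \<beta>) \<le> r" by (subst pos_divide_le_eq[OF nb]) (simp add: mult.commute)
    moreover have "inner v s = inner w s / (- \<beta>)" by (simp add: v_def)
    ultimately show False using r(2) by linarith
  qed
  have c0: "inner w s0 + \<beta> * p s0 \<ge> 0"
  proof (rule ccontr)
    assume nc: "\<not> inner w s0 + \<beta> * p s0 \<ge> 0"
    define c where "c = inner w s0 + \<beta> * p s0"
    have c: "c < 0" using nc by (simp add: c_def)
    define t where "t = (1 - b) / (- c)"
    have t: "t \<ge> 0" using b0 c unfolding t_def by (intro divide_nonneg_pos) auto
    have "t * c = b - 1" using c by (simp add: t_def field_simps)
    moreover have "inner a (t *\<^sub>R s0, t * p s0) \<ge> b" using ab(3) t by (auto simp: T_def)
    then have "t * c \<ge> b" by (simp add: a c_def algebra_simps)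
    ultimately show False by linarith
  qed
  have "inner v s0 \<ge> p s0"
  proof -
    have "inner v s0 = inner w s0 / (- \<beta>)" by (simp add: v_def)
    moreover have "inner w s0 \<ge> (- \<beta>) * p s0" using c0 by linarith
    moreover have nb: "- \<beta> > 0" using beta by simp
    ultimately show ?thesis by (simp only:) (subst pos_le_divide_eq[OF nb], simp add: mult.commute)
  qed
  with vle[of s0] have "inner v s0 = p s0" by linarith
  with vle show ?thesis by blast
qed

definition Pz :: "'n::finite set \<Rightarrow> real^'n \<Rightarrow> real^'n" where
  "Pz Iz s = (\<chi> i. if i \<in> Iz then 0 else s$i)"

lemma Pz_Vc: "Pz Iz s \<in> Vc Iz" by (simp add: Pz_def Vc_def)
lemma Pz_id: "s \<in> Vc Iz \<Longrightarrow> Pz Iz s = s" by (simp add: Pz_def Vc_def vec_eq_iff)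
lemma Pz_add: "Pz Iz (s1 + s2) = Pz Iz s1 + Pz Iz s2" by (simp add: Pz_def vec_eq_iff)
lemma Pz_scale: "Pz Iz (a *\<^sub>R s) = a *\<^sub>R Pz Iz s" by (simp add: Pz_def vec_eq_iff)
lemma Pz_axis: "i \<in> Iz \<Longrightarrow> Pz Iz (axis i c) = 0" by (simp add: Pz_def vec_eq_iff axis_def)

lemma clarke_support:
  fixes Iz :: "'n::finite set"
  assumes L: "lipc Iz h L" and s0: "s0 \<in> Vc Iz"
  shows "\<exists>v\<in>subdiff_c Iz h x. inner v s0 = pc Iz h x s0 \<and> (\<forall>s\<in>Vc Iz. inner v s \<le> pc Iz h x s)"
proof -
  define p where "p s = pc Iz h x (Pz Iz s)" for s
  have add: "p (s1 + s2) \<le> p s1 + p s2" for s1 s2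
    unfolding p_def Pz_add by (rule pc_add[OF L Pz_Vc Pz_Vc])
  have hom: "p (a *\<^sub>R s) = a * p s" if "a > 0" for a s
    unfolding p_def Pz_scale by (rule pc_scale[OF L Pz_Vc that])
  obtain v where v: "\<forall>s. inner v s \<le> p s" "inner v s0 = p s0"
    using sublin_support[of p s0, OF add hom] by blast
  have p0: "p s0 = pc Iz h x s0" using s0 by (simp add: p_def Pz_id)
  have vs: "inner v s \<le> pc Iz h x s" if "s \<in> Vc Iz" for s
    using v(1)[rule_format, of s] that by (simp add: p_def Pz_id)
  have vz: "v $ i = 0" if "i \<in> Iz" for i
  proof -
    have "p (axis i 1) = 0" "p (axis i (-1)) = 0" using that pc_zero[OF L] by (simp_all add: p_def Pz_axis)
    then have "v $ i \<le> 0" "- (v $ i) \<le> 0" using v(1)[rule_format, of "axis i 1"] v(1)[rule_format, of "axis i (-1)"]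
      by (simp_all add: inner_axis)
    then show ?thesis by linarith
  qed
  have "v \<in> subdiff_c Iz h x"
    unfolding subdiff_c_def
  proof (intro CollectI conjI ballI allI impI)
    fix i assume "i \<in> Iz" then show "v $ i = 0" by (rule vz)
  next
    fix s :: "real^'n" assume "\<forall>i\<in>Iz. s $ i = 0"
    then have sV: "s \<in> Vc Iz" by (simp add: Vc_def)
    show "ereal (inner s v) \<le> clarke_c Iz h x s"
      using clarke_finite(1)[OF L sV, of x] vs[OF sV] by (simp add: inner_commute)
  qed
  then show ?thesis using v(2) p0 vs by auto
qed

definition sublin :: "'a::real_vector set \<Rightarrow> ('a \<Rightarrow> real) \<Rightarrow> bool" where
  "sublin C F \<longleftrightarrow> (\<forall>s1\<in>C. \<forall>s2\<in>C. F (s1 + s2) \<le> F s1 + F s2) \<and> (\<forall>s\<in>C. \<forall>a>0. F (a *\<^sub>R s) = a * F s)"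

definition cone_c :: "'a::real_vector set \<Rightarrow> bool" where
  "cone_c C \<longleftrightarrow> (\<forall>s1\<in>C. \<forall>s2\<in>C. s1 + s2 \<in> C) \<and> (\<forall>s\<in>C. \<forall>a>0. a *\<^sub>R s \<in> C)"

lemma sublin_add: assumes "sublin C F" "sublin C G" shows "sublin C (\<lambda>s. F s + G s)"
proof -
  have "F (s1 + s2) + G (s1 + s2) \<le> (F s1 + G s1) + (F s2 + G s2)" if "s1 \<in> C" "s2 \<in> C" for s1 s2
  proof -
    have "F (s1 + s2) \<le> F s1 + F s2" "G (s1 + s2) \<le> G s1 + G s2" using assms that by (auto simp: sublin_def)
    then show ?thesis by linarith
  qed
  then show ?thesis using assms by (auto simp: sublin_def distrib_left)
qed

lemma sublin_scale: assumes "sublin C F" "c \<ge> 0" shows "sublin C (\<lambda>s. c * F s)"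
proof -
  have "c * F (s1 + s2) \<le> c * F s1 + c * F s2" if "s1 \<in> C" "s2 \<in> C" for s1 s2
  proof -
    have "F (s1 + s2) \<le> F s1 + F s2" using assms that by (auto simp: sublin_def)
    then show ?thesis using assms(2) by (metis distrib_left mult_left_mono)
  qed
  then show ?thesis using assms by (auto simp: sublin_def)
qed

lemma sublin_max0: "sublin C F \<Longrightarrow> sublin C (\<lambda>s. max 0 (F s))"
  unfolding sublin_def by (auto simp: max_mult_distrib_left) (smt (verit))+

lemma sublin_zero: "sublin C (\<lambda>s. 0)"
  unfolding sublin_def by auto

lemma sublin_sum: "finite A \<Longrightarrow> (\<And>i. i \<in> A \<Longrightarrow> sublin C (G i)) \<Longrightarrow> sublin C (\<lambda>s. \<Sum>i\<in>A. G i s)"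
  by (induction A rule: finite_induct) (auto intro: sublin_add sublin_zero)

lemma minimax1:
  fixes C :: "'a::real_vector set" and Phi G :: "'a \<Rightarrow> real"
  assumes C: "cone_c C" and sP: "sublin C Phi" and sG: "sublin C G" and c: "c \<ge> 0"
    and hyp: "\<And>s. s \<in> C \<Longrightarrow> Phi s + c * max 0 (G s) \<ge> 0"
  shows "\<exists>\<mu>. 0 \<le> \<mu> \<and> \<mu> \<le> c \<and> (\<forall>s\<in>C. Phi s + \<mu> * G s \<ge> 0)"
proof -
  define Ls where "Ls = insert 0 {- Phi s / G s | s. s \<in> C \<and> G s > 0}"
  have upc: "x \<le> c" if "x \<in> Ls" for x
  proof -
    { fix s assume s: "s \<in> C" "G s > 0"
      then have "Phi s + c * G s \<ge> 0" using hyp[OF s(1)] by simp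
      then have "- Phi s \<le> c * G s" by linarith
      then have "- Phi s / G s \<le> c" using s(2) by (subst pos_divide_le_eq) (auto simp: mult.commute) }
    then show ?thesis using that c by (auto simp: Ls_def)
  qed
  have bdd: "bdd_above Ls" using upc by (auto simp: bdd_above_def)
  define \<mu> where "\<mu> = Sup Ls"
  have mu0: "0 \<le> \<mu>" unfolding \<mu>_def by (rule cSup_upper[OF _ bdd]) (simp add: Ls_def)
  have muc: "\<mu> \<le> c" unfolding \<mu>_def by (rule cSup_least) (auto simp: Ls_def upc)
  have cross: "- Phi s1 / G s1 \<le> Phi s2 / (- G s2)"
    if s1: "s1 \<in> C" "G s1 > 0" and s2: "s2 \<in> C" "G s2 < 0" for s1 s2
  proof -
    define a where "a = - G s2"
    define b where "b = G s1"
    have ab: "a > 0" "b > 0" using s1 s2 by (simp_all add: a_def b_def)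
    have as1: "a *\<^sub>R s1 \<in> C" and bs2: "b *\<^sub>R s2 \<in> C" using C ab s1 s2 by (auto simp: cone_c_def)
    then have sC: "a *\<^sub>R s1 + b *\<^sub>R s2 \<in> C" using C by (auto simp: cone_c_def)
    have "G (a *\<^sub>R s1 + b *\<^sub>R s2) \<le> G (a *\<^sub>R s1) + G (b *\<^sub>R s2)" using sG as1 bs2 by (auto simp: sublin_def)
    also have "\<dots> = a * G s1 + b * G s2" using sG ab s1 s2 by (auto simp: sublin_def)
    also have "\<dots> = 0" by (simp add: a_def b_def)
    finally have "max 0 (G (a *\<^sub>R s1 + b *\<^sub>R s2)) = 0" by simp
    then have "Phi (a *\<^sub>R s1 + b *\<^sub>R s2) \<ge> 0" using hyp[OF sC] by simp
    moreover have "Phi (a *\<^sub>R s1 + b *\<^sub>R s2) \<le> a * Phi s1 + b * Phi s2"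
      using sP as1 bs2 ab s1 s2 by (auto simp: sublin_def) (metis (no_types, lifting))
    ultimately have key: "0 \<le> a * Phi s1 + b * Phi s2" by linarith
    have "- Phi s1 / G s1 \<le> Phi s2 / (- G s2) \<longleftrightarrow> - Phi s1 * (- G s2) \<le> Phi s2 * G s1"
      using s1(2) s2(2) by (simp add: divide_le_eq le_divide_eq field_simps)
    then show ?thesis using key by (simp add: a_def b_def algebra_simps)
  qed
  have "\<forall>s\<in>C. Phi s + \<mu> * G s \<ge> 0"
  proof
    fix s assume sC: "s \<in> C"
    consider "G s > 0" | "G s = 0" | "G s < 0" by linarith
    then show "Phi s + \<mu> * G s \<ge> 0"
    proof cases
      case 1
      have "- Phi s / G s \<le> \<mu>" unfolding \<mu>_def using sC 1 by (intro cSup_upper[OF _ bdd]) (auto simp: Ls_def)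
      then have "- Phi s \<le> \<mu> * G s" using pos_divide_le_eq[OF 1, of "- Phi s" \<mu>] by blast
      then show ?thesis by linarith
    next
      case 2 then show ?thesis using hyp[OF sC] by simp
    next
      case 3
      have P0: "Phi s \<ge> 0" using hyp[OF sC] 3 by simp
      have "\<mu> \<le> Phi s / (- G s)" unfolding \<mu>_def
      proof (rule cSup_least)
        show "Ls \<noteq> {}" by (simp add: Ls_def)
        fix x assume "x \<in> Ls"
        moreover have "0 \<le> Phi s / (- G s)" using P0 3 by (intro divide_nonneg_pos) auto
        ultimately show "x \<le> Phi s / (- G s)"
          using cross[OF _ _ sC 3] unfolding Ls_def by blast
      qed
      moreover have ng: "- G s > 0" using 3 by simp
      ultimately have "\<mu> * (- G s) \<le> Phi s" using pos_le_divide_eq[OF ng, of \<mu> "Phi s"] by blast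
      then show ?thesis by simp
    qed
  qed
  with mu0 muc show ?thesis by blast
qed

lemma multipliers:
  fixes C :: "'a::real_vector set" and G :: "nat \<Rightarrow> 'a \<Rightarrow> real"
  assumes A: "finite A" and C: "cone_c C" and c: "c \<ge> 0" and sG: "\<And>i. i \<in> A \<Longrightarrow> sublin C (G i)"
  shows "sublin C F \<Longrightarrow> (\<And>s. s \<in> C \<Longrightarrow> F s + c * (\<Sum>i\<in>A. max 0 (G i s)) \<ge> 0) \<Longrightarrow>
    \<exists>lam. (\<forall>i\<in>A. 0 \<le> lam i \<and> lam i \<le> c) \<and> (\<forall>s\<in>C. F s + (\<Sum>i\<in>A. lam i * G i s) \<ge> 0)"
  using A sG
proof (induction A arbitrary: F rule: finite_induct)
  case empty then show ?case by auto
next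
  case (insert a A)
  define Phi where "Phi s = F s + c * (\<Sum>i\<in>A. max 0 (G i s))" for s
  have sPhi: "sublin C Phi" unfolding Phi_def
    by (intro sublin_add insert.prems sublin_scale c sublin_sum insert.hyps sublin_max0) auto
  have sGa: "sublin C (G a)" using insert.prems by auto
  have "Phi s + c * max 0 (G a s) \<ge> 0" if "s \<in> C" for s
    using insert.prems(2)[OF that] insert.hyps by (simp add: Phi_def algebra_simps)
  then obtain \<mu> where mu: "0 \<le> \<mu>" "\<mu> \<le> c" "\<forall>s\<in>C. Phi s + \<mu> * G a s \<ge> 0"
    using minimax1[OF C sPhi sGa c] by blast
  define F' where "F' s = F s + \<mu> * G a s" for s
  have sF': "sublin C F'" unfolding F'_def by (intro sublin_add insert.prems sublin_scale sGa mu(1))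
  have "F' s + c * (\<Sum>i\<in>A. max 0 (G i s)) \<ge> 0" if "s \<in> C" for s
    using mu(3) that by (simp add: F'_def Phi_def algebra_simps)
  then obtain lam where lam: "\<forall>i\<in>A. 0 \<le> lam i \<and> lam i \<le> c" "\<forall>s\<in>C. F' s + (\<Sum>i\<in>A. lam i * G i s) \<ge> 0"
    using insert.IH[OF sF'] insert.prems(3) by auto
  define lam' where "lam' = lam(a := \<mu>)"
  have "(\<Sum>i\<in>insert a A. lam' i * G i s) = \<mu> * G a s + (\<Sum>i\<in>A. lam i * G i s)" for s
  proof -
    have "(\<Sum>i\<in>A. lam' i * G i s) = (\<Sum>i\<in>A. lam i * G i s)"
      using insert.hyps by (intro sum.cong) (auto simp: lam'_def)
    then show ?thesis using insert.hyps by (simp add: lam'_def)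
  qed
  then have "\<forall>s\<in>C. F s + (\<Sum>i\<in>insert a A. lam' i * G i s) \<ge> 0"
    using lam(2) by (simp add: F'_def algebra_simps)
  moreover have "\<forall>i\<in>insert a A. 0 \<le> lam' i \<and> lam' i \<le> c" using lam(1) mu by (auto simp: lam'_def)
  ultimately show ?case by blast
qed

definition RR :: "'n::finite set \<Rightarrow> real^'n \<Rightarrow> real^'n \<Rightarrow> real^'n \<Rightarrow> ((real^'n) \<times> real) set" where
  "RR Iz l u s = {(y,t). y \<in> boxX l u \<inter> intset Iz \<and> y + t *\<^sub>R s \<in> boxX l u \<inter> intset Iz}"

lemma cj_qq: "clarke_jahn Iz l u P x s = Limsup (inf (CF Iz x) (principal (RR Iz l u s))) (\<lambda>yt. ereal (qq P s yt))"
  unfolding clarke_jahn_def CF_def RR_def qq_def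
  by (rule arg_cong[of _ _ "Limsup _"]) (simp add: fun_eq_iff)

lemma cj_le:
  assumes "eventually (\<lambda>yt. qq P s yt \<le> a) (CF Iz x)"
  shows "clarke_jahn Iz l u P x s \<le> ereal a"
  unfolding cj_qq
  by (rule Limsup_bounded) (use assms in \<open>auto simp: eventually_inf_principal elim!: eventually_mono\<close>)

lemma qq_pen:
  "qq (penalty f g m e) s (y,t) = qq f s (y,t) + (1/e) * (\<Sum>i=1..m. (max 0 (g i (y + t *\<^sub>R s)) - max 0 (g i y)) / t)"
  by (simp add: penalty_def sum_subtractf sum_divide_distrib[symmetric] diff_divide_distrib add_divide_distrib
      right_diff_distrib)

lemma ev_near:
  assumes "\<rho> > 0" "s \<in> Vc Iz"
  shows "eventually (\<lambda>yt. same_int_part Iz (fst yt) x \<and> same_int_part Iz (fst yt + snd yt *\<^sub>R s) x \<and>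
     dist (fst yt) x < \<rho> \<and> dist (fst yt + snd yt *\<^sub>R s) x < \<rho> \<and> snd yt > 0) (CF Iz x)"
proof -
  have pos: "0 < 2 * (norm s + 1)" using norm_ge_zero[of s] by (smt (verit))
  define d where "d = min (\<rho>/2) (\<rho> / (2 * (norm s + 1)))"
  have d0: "0 < d" using pos assms by (simp add: d_def)
  have main: "same_int_part Iz (y + t *\<^sub>R s) x \<and> dist (y + t *\<^sub>R s) x < \<rho> \<and> dist y x < \<rho>"
    if y: "same_int_part Iz y x" "dist y x < d" "0 < t" "t < d" for y t
  proof -
    have "t * (2 * (norm s + 1)) < \<rho>" using y(4) pos_less_divide_eq[OF pos] by (auto simp: d_def)
    then have ts: "t * norm s < \<rho>/2" using y(3) by (simp add: algebra_simps)
    have "dist (y + t *\<^sub>R s) x \<le> dist y x + dist (y + t *\<^sub>R s) y" by (metis dist_commute dist_triangle add.commute)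
    also have "dist (y + t *\<^sub>R s) y = t * norm s" using y(3) by (simp add: dist_norm)
    finally have "dist (y + t *\<^sub>R s) x < \<rho>" using y(2) ts by (simp add: d_def)
    moreover have "same_int_part Iz (y + t *\<^sub>R s) x" using same_trans[OF same_shift[OF assms(2)] y(1)] .
    moreover have "dist y x < \<rho>" using y(2) assms(1) by (simp add: d_def)
    ultimately show ?thesis by simp
  qed
  show ?thesis unfolding ev_CF using d0 main by (intro exI[of _ d]) auto
qed

lemma lip_close:
  assumes "lipc Iz h L" "same_int_part Iz z x" "dist z x < \<rho>"
  shows "\<bar>h z - h x\<bar> < (\<bar>L\<bar> + 1) * \<rho>"
proof -
  have "\<bar>h z - h x\<bar> \<le> L * norm (z - x)" using assms unfolding lipc_def by blast
  also have "\<dots> \<le> \<bar>L\<bar> * dist z x" by (simp add: dist_norm mult_right_mono)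
  also have "\<dots> \<le> (\<bar>L\<bar> + 1) * dist z x" by (simp add: mult_right_mono)
  also have "\<dots> < (\<bar>L\<bar> + 1) * \<rho>" using assms(3) by (intro mult_strict_left_mono) auto
  finally show ?thesis .
qed

lemma ev_sign:
  assumes L: "lipc Iz h L" and s: "s \<in> Vc Iz"
  shows "h x < 0 \<Longrightarrow> eventually (\<lambda>yt. h (fst yt) < 0 \<and> h (fst yt + snd yt *\<^sub>R s) < 0) (CF Iz x)"
    and "h x > 0 \<Longrightarrow> eventually (\<lambda>yt. h (fst yt) > 0 \<and> h (fst yt + snd yt *\<^sub>R s) > 0) (CF Iz x)"
proof -
  define \<rho> where "\<rho> = \<bar>h x\<bar> / (\<bar>L\<bar> + 1)"
  have r: "(\<bar>L\<bar> + 1) * \<rho> = \<bar>h x\<bar>" by (simp add: \<rho>_def add_pos_nonneg)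
  { assume "h x \<noteq> 0"
    then have "\<rho> > 0" by (simp add: \<rho>_def add_pos_nonneg)
    from ev_near[OF this s, of x]
    have "eventually (\<lambda>yt. \<bar>h (fst yt) - h x\<bar> < \<bar>h x\<bar> \<and> \<bar>h (fst yt + snd yt *\<^sub>R s) - h x\<bar> < \<bar>h x\<bar>) (CF Iz x)"
      by (rule eventually_mono) (use lip_close[OF L] r in metis) }
  note * = this
  show "h x < 0 \<Longrightarrow> eventually (\<lambda>yt. h (fst yt) < 0 \<and> h (fst yt + snd yt *\<^sub>R s) < 0) (CF Iz x)"
    using * by (auto elim!: eventually_mono)
  show "h x > 0 \<Longrightarrow> eventually (\<lambda>yt. h (fst yt) > 0 \<and> h (fst yt + snd yt *\<^sub>R s) > 0) (CF Iz x)"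
    using * by (auto elim!: eventually_mono)
qed

lemma max0_quot: fixes a b t :: real assumes "t > 0" shows "(max 0 a - max 0 b) / t \<le> max 0 ((a - b) / t)"
proof -
  have "max 0 a - max 0 b \<le> max 0 (a - b)" unfolding max_def by auto
  then have "(max 0 a - max 0 b) / t \<le> max 0 (a - b) / t" using assms by (simp add: divide_right_mono)
  also have "max 0 (a - b) / t = max 0 ((a - b) / t)"
  proof (cases "a - b \<ge> 0")
    case True
    then have "(a - b) / t \<ge> 0" using assms by simp
    then show ?thesis using True by (simp add: max_def)
  next
    case False
    then have "(a - b) / t < 0" using assms by (simp add: divide_neg_pos)
    then show ?thesis using False by (simp add: max_def)
  qed
  finally show ?thesis .
qed

lemma Dc_Vc: "s \<in> Dc Iz l u x \<Longrightarrow> s \<in> Vc Iz"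
  by (simp add: Dc_def Vc_def)

lemma Dc_cone: "cone_c (Dc Iz l u x)"
proof -
  have "s1 + s2 \<in> Dc Iz l u x" if "s1 \<in> Dc Iz l u x" "s2 \<in> Dc Iz l u x" for s1 s2
    using that unfolding Dc_def by (force intro: add_nonneg_nonneg add_nonpos_nonpos)
  moreover have "a *\<^sub>R s \<in> Dc Iz l u x" if "s \<in> Dc Iz l u x" "a > 0" for s a
    using that unfolding Dc_def by (force intro: mult_nonneg_nonneg mult_nonneg_nonpos)
  ultimately show ?thesis unfolding cone_c_def by blast
qed

lemma sublin_pc: "lipc Iz h L \<Longrightarrow> sublin (Dc Iz l u x) (pc Iz h x)"
  unfolding sublin_def using pc_add pc_scale Dc_Vc by metis

lemma arith_aux: "(p + \<eta>) + (1/e) * (S + c * \<eta>) = (p + (1/e) * S) + \<eta> * (1 + c / e)" for p \<eta> e S c :: real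
  by (simp add: algebra_simps)

lemma key_ineq:
  fixes Iz :: "'n::finite set"
  assumes Lf: "lipc Iz f L" and Lg: "\<forall>i\<in>{1..m}. lipc Iz (g i) L" and e: "e > 0"
    and xF: "x \<in> feasF g m" and sD: "s \<in> Dc Iz l u x"
    and cj: "clarke_jahn Iz l u (penalty f g m e) x s \<ge> 0"
  shows "pc Iz f x s + (1/e) * (\<Sum>i\<in>{i\<in>{1..m}. g i x = 0}. max 0 (pc Iz (g i) x s)) \<ge> 0"
proof (rule ccontr)
  define A where "A = {i\<in>{1..m}. g i x = 0}"
  define V where "V = pc Iz f x s + (1/e) * (\<Sum>i\<in>A. max 0 (pc Iz (g i) x s))"
  assume "\<not> ?thesis"
  then have V0: "V < 0" by (simp add: V_def A_def)
  have sV: "s \<in> Vc Iz" using sD by (rule Dc_Vc)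
  have finA: "finite A" by (simp add: A_def)
  define \<eta> where "\<eta> = - V / (2 * (1 + card A / e))"
  have den: "0 < 2 * (1 + card A / e)" using e by (simp add: add_pos_nonneg)
  have eta0: "\<eta> > 0" unfolding \<eta>_def using V0 den by (intro divide_pos_pos) auto
  have etaeq: "\<eta> * (1 + card A / e) = - V / 2" using den by (simp add: \<eta>_def field_simps)
  have E1: "eventually (\<lambda>yt. qq f s yt < pc Iz f x s + \<eta>) (CF Iz x)"
    by (rule pc_ev[OF Lf sV]) (use eta0 in simp)
  have E2: "eventually (\<lambda>yt. \<forall>i\<in>A. qq (g i) s yt < pc Iz (g i) x s + \<eta>) (CF Iz x)"
    using finA by (rule eventually_ball_finite) (use Lg sV eta0 in \<open>auto simp: A_def intro!: pc_ev\<close>)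
  have E3: "eventually (\<lambda>yt. \<forall>i\<in>{1..m} - A. g i (fst yt) < 0 \<and> g i (fst yt + snd yt *\<^sub>R s) < 0) (CF Iz x)"
  proof (rule eventually_ball_finite)
    show "finite ({1..m} - A)" by simp
    show "\<forall>i\<in>{1..m} - A. eventually (\<lambda>yt. g i (fst yt) < 0 \<and> g i (fst yt + snd yt *\<^sub>R s) < 0) (CF Iz x)"
    proof
      fix i assume i: "i \<in> {1..m} - A"
      then have "g i x < 0" using xF by (force simp: A_def feasF_def)
      then show "eventually (\<lambda>yt. g i (fst yt) < 0 \<and> g i (fst yt + snd yt *\<^sub>R s) < 0) (CF Iz x)"
        using ev_sign(1)[of Iz "g i" L s x] Lg i sV by auto
    qed
  qed
  have E4: "eventually (\<lambda>yt. snd yt > 0) (CF Iz x)"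
    using ev_near[OF zero_less_one sV, of x] by (auto elim!: eventually_mono)
  have "eventually (\<lambda>yt. qq (penalty f g m e) s yt \<le> V / 2) (CF Iz x)"
    using E1 E2 E3 E4
  proof eventually_elim
    case (elim yt)
    obtain y t where yt: "yt = (y,t)" by (cases yt)
    have t: "t > 0" using elim(4) yt by simp
    have trm: "(max 0 (g i (y + t *\<^sub>R s)) - max 0 (g i y)) / t \<le> (if i \<in> A then max 0 (pc Iz (g i) x s) + \<eta> else 0)"
      if i: "i \<in> {1..m}" for i
    proof (cases "i \<in> A")
      case True
      have "(max 0 (g i (y + t *\<^sub>R s)) - max 0 (g i y)) / t \<le> max 0 (qq (g i) s (y,t))"
        using max0_quot[OF t] by simp
      also have "\<dots> \<le> max 0 (pc Iz (g i) x s + \<eta>)" using elim(2) True yt by auto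
      also have "\<dots> \<le> max 0 (pc Iz (g i) x s) + \<eta>" using eta0 by simp
      finally show ?thesis using True by simp
    next
      case False
      then show ?thesis using elim(3) i yt by auto
    qed
    have "(\<Sum>i=1..m. (max 0 (g i (y + t *\<^sub>R s)) - max 0 (g i y)) / t)
        \<le> (\<Sum>i=1..m. (if i \<in> A then max 0 (pc Iz (g i) x s) + \<eta> else 0))"
      by (rule sum_mono) (rule trm, simp)
    also have "\<dots> = (\<Sum>i\<in>A. max 0 (pc Iz (g i) x s) + \<eta>)"
      by (simp add: A_def sum.inter_filter[symmetric])
    also have "\<dots> = (\<Sum>i\<in>A. max 0 (pc Iz (g i) x s)) + card A * \<eta>"
      by (simp add: sum.distrib)
    finally have S: "(\<Sum>i=1..m. (max 0 (g i (y + t *\<^sub>R s)) - max 0 (g i y)) / t)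
        \<le> (\<Sum>i\<in>A. max 0 (pc Iz (g i) x s)) + card A * \<eta>" .
    have "qq (penalty f g m e) s yt = qq f s (y,t) + (1/e) * (\<Sum>i=1..m. (max 0 (g i (y + t *\<^sub>R s)) - max 0 (g i y)) / t)"
      unfolding yt by (rule qq_pen)
    also have "\<dots> \<le> (pc Iz f x s + \<eta>) + (1/e) * ((\<Sum>i\<in>A. max 0 (pc Iz (g i) x s)) + card A * \<eta>)"
      using elim(1) yt S e by (intro add_mono mult_left_mono) auto
    also have "\<dots> = V + \<eta> * (1 + card A / e)"
      unfolding V_def by (rule arith_aux)
    also have "\<dots> = V / 2" using etaeq by simp
    finally show ?case .
  qed
  then have "clarke_jahn Iz l u (penalty f g m e) x s \<le> ereal (V / 2)" by (rule cj_le)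
  from order_trans[OF cj this] have "0 \<le> V / 2" by simp
  with V0 show False by simp
qed

lemma feasible_kkt:
  fixes Iz :: "'n::finite set"
  assumes Lf: "lipc Iz f L" and Lg: "\<forall>i\<in>{1..m}. lipc Iz (g i) L" and e: "e > 0"
    and st: "stationary_pen Iz l u f g m e x" and xF: "x \<in> feasF g m"
  shows "kkt_point Iz l u f g m x"
proof -
  define A where "A = {i\<in>{1..m}. g i x = 0}"
  have xbox: "x \<in> boxX l u \<inter> intset Iz" using st by (simp add: stationary_pen_def)
  have hyp: "pc Iz f x s + (1/e) * (\<Sum>i\<in>A. max 0 (pc Iz (g i) x s)) \<ge> 0" if "s \<in> Dc Iz l u x" for s
    unfolding A_def by (rule key_ineq[OF Lf Lg e xF that]) (use st that in \<open>simp add: stationary_pen_def\<close>)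
  obtain lam where lam: "\<forall>i\<in>A. 0 \<le> lam i \<and> lam i \<le> 1/e"
     "\<forall>s\<in>Dc Iz l u x. pc Iz f x s + (\<Sum>i\<in>A. lam i * pc Iz (g i) x s) \<ge> 0"
  proof -
    have finA: "finite A" by (simp add: A_def)
    have c0: "1/e \<ge> 0" using e by simp
    have sG: "sublin (Dc Iz l u x) (pc Iz (g i) x)" if "i \<in> A" for i
      using that Lg by (intro sublin_pc) (auto simp: A_def)
    show ?thesis using multipliers[OF finA Dc_cone c0 sG sublin_pc[OF Lf] hyp] that by blast
  qed
  define lam' where "lam' i = (if i \<in> A then lam i else 0)" for i
  have lam'0: "\<forall>i\<in>{1..m}. lam' i \<ge> 0" using lam(1) by (simp add: lam'_def)
  have comp: "(\<Sum>i=1..m. lam' i * g i x) = 0"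
    by (rule sum.neutral) (auto simp: lam'_def A_def)
  have sums: "(\<Sum>i=1..m. lam' i * c i) = (\<Sum>i\<in>A. lam i * c i)" for c :: "nat \<Rightarrow> real"
  proof -
    have "(\<Sum>i=1..m. lam' i * c i) = (\<Sum>i=1..m. if i \<in> A then lam i * c i else 0)"
      by (rule sum.cong) (auto simp: lam'_def)
    also have "\<dots> = (\<Sum>i\<in>A. lam i * c i)" by (simp add: A_def sum.inter_filter[symmetric])
    finally show ?thesis .
  qed
  have grad: "\<exists>\<xi>0\<in>subdiff_c Iz f x. \<exists>\<xi>::nat \<Rightarrow> real^'n.
            (\<forall>i\<in>{1..m}. \<xi> i \<in> subdiff_c Iz (g i) x) \<and>
            (\<xi>0 + (\<Sum>i=1..m. lam' i *\<^sub>R \<xi> i)) \<bullet> s \<ge> 0" if sD: "s \<in> Dc Iz l u x" for s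
  proof -
    have sV: "s \<in> Vc Iz" using sD by (rule Dc_Vc)
    obtain \<xi>0 where x0: "\<xi>0 \<in> subdiff_c Iz f x" "inner \<xi>0 s = pc Iz f x s"
      using clarke_support[OF Lf sV, of x] by blast
    have "\<forall>i\<in>{1..m}. \<exists>v. v \<in> subdiff_c Iz (g i) x \<and> inner v s = pc Iz (g i) x s"
      using clarke_support[OF _ sV] Lg by blast
    then obtain \<xi> where xi: "\<forall>i\<in>{1..m}. \<xi> i \<in> subdiff_c Iz (g i) x \<and> inner (\<xi> i) s = pc Iz (g i) x s"
      by metis
    have "(\<xi>0 + (\<Sum>i=1..m. lam' i *\<^sub>R \<xi> i)) \<bullet> s = inner \<xi>0 s + (\<Sum>i=1..m. lam' i * inner (\<xi> i) s)"
      by (simp add: inner_add_left inner_sum_left)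
    also have "(\<Sum>i=1..m. lam' i * inner (\<xi> i) s) = (\<Sum>i=1..m. lam' i * pc Iz (g i) x s)"
      using xi by (intro sum.cong) auto
    also have "\<dots> = (\<Sum>i\<in>A. lam i * pc Iz (g i) x s)" by (rule sums)
    finally have "(\<xi>0 + (\<Sum>i=1..m. lam' i *\<^sub>R \<xi> i)) \<bullet> s = pc Iz f x s + (\<Sum>i\<in>A. lam i * pc Iz (g i) x s)"
      using x0 by simp
    then have "(\<xi>0 + (\<Sum>i=1..m. lam' i *\<^sub>R \<xi> i)) \<bullet> s \<ge> 0" using lam(2) sD by simp
    moreover have "\<forall>i\<in>{1..m}. \<xi> i \<in> subdiff_c Iz (g i) x" using xi by blast
    ultimately show ?thesis using x0(1) by blast
  qed
  have pen_feas: "penalty f g m e z = f z" if "z \<in> feasF g m" for z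
  proof -
    have "(\<Sum>i=1..m. max 0 (g i z)) = 0" using that by (intro sum.neutral) (auto simp: feasF_def max_def)
    then show ?thesis by (simp add: penalty_def)
  qed
  have disc: "\<forall>y\<in>Bz Iz l u x \<inter> feasF g m. f x \<le> f y"
    using st pen_feas xF by (auto simp: stationary_pen_def)
  show ?thesis unfolding kkt_point_def
    using xF xbox lam'0 comp grad disc by blast
qed

lemma int_eq_half: fixes a b :: real assumes "a \<in> \<int>" "b \<in> \<int>" "\<bar>a - b\<bar> < 1/2" shows "a = b"
proof -
  have "a - b \<in> \<int>" using assms by simp
  moreover have "\<bar>a - b\<bar> < 1" using assms(3) by simp
  ultimately have "a - b = 0" by (rule Ints_nonzero_abs_less1)
  then show ?thesis by simp
qed

lemma ev_same_int:
  fixes Iz :: "'n::finite set"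
  assumes "x \<in> intset Iz"
  shows "eventually (\<lambda>y. y \<in> intset Iz \<longrightarrow> same_int_part Iz y x) (nhds x)"
  unfolding eventually_nhds_metric
proof (intro exI[of _ "1/2"] conjI allI impI)
  fix y assume d: "dist y x < 1/2" and y: "y \<in> intset Iz"
  show "same_int_part Iz y x" unfolding same_int_part_def
  proof
    fix i assume i: "i \<in> Iz"
    have "\<bar>y$i - x$i\<bar> < 1/2" using le_less_trans[OF dist_vec_nth_le[of y i x] d] by (simp add: dist_real_def)
    then show "y$i = x$i" using int_eq_half y assms i by (auto simp: intset_def)
  qed
qed simp

lemma ev_ne:
  fixes x :: "real^'n::finite"
  assumes "x$i \<noteq> c"
  shows "eventually (\<lambda>y. y$i \<noteq> c) (nhds x)"
  unfolding eventually_nhds_metric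
proof (intro exI[of _ "\<bar>x$i - c\<bar>"] conjI allI impI)
  show "0 < \<bar>x$i - c\<bar>" using assms by simp
  fix y assume d: "dist y x < \<bar>x$i - c\<bar>"
  have "\<bar>y$i - x$i\<bar> < \<bar>x$i - c\<bar>" using le_less_trans[OF dist_vec_nth_le[of y i x] d] by (simp add: dist_real_def)
  then show "y$i \<noteq> c" by auto
qed

lemma ev_Dc:
  fixes Iz :: "'n::finite set"
  assumes "s \<in> Dc Iz l u x"
  shows "eventually (\<lambda>y. s \<in> Dc Iz l u y) (nhds x)"
proof -
  have "eventually (\<lambda>y. (i \<notin> Iz \<and> y$i = l$i \<longrightarrow> s$i \<ge> 0) \<and> (i \<notin> Iz \<and> y$i = u$i \<longrightarrow> s$i \<le> 0)) (nhds x)" for i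
  proof -
    have 1: "eventually (\<lambda>y. i \<notin> Iz \<and> y$i = l$i \<longrightarrow> s$i \<ge> 0) (nhds x)"
    proof (cases "x$i = l$i")
      case True then show ?thesis using assms by (auto simp: Dc_def)
    next
      case False show ?thesis by (rule eventually_mono[OF ev_ne[OF False]]) auto
    qed
    have 2: "eventually (\<lambda>y. i \<notin> Iz \<and> y$i = u$i \<longrightarrow> s$i \<le> 0) (nhds x)"
    proof (cases "x$i = u$i")
      case True then show ?thesis using assms by (auto simp: Dc_def)
    next
      case False show ?thesis by (rule eventually_mono[OF ev_ne[OF False]]) auto
    qed
    show ?thesis using eventually_conj[OF 1 2] .
  qed
  then have "eventually (\<lambda>y. \<forall>i. (i \<notin> Iz \<and> y$i = l$i \<longrightarrow> s$i \<ge> 0) \<and> (i \<notin> Iz \<and> y$i = u$i \<longrightarrow> s$i \<le> 0)) (nhds x)"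
    by (rule eventually_all_finite)
  then show ?thesis using assms by (auto simp: Dc_def elim!: eventually_mono)
qed

lemma ev_CF_shift:
  assumes "eventually P (CF Iz x)"
  shows "eventually (\<lambda>y0. same_int_part Iz y0 x \<longrightarrow> eventually P (CF Iz y0)) (nhds x)"
proof -
  obtain d where d: "d > 0" "\<And>y t. same_int_part Iz y x \<Longrightarrow> dist y x < d \<Longrightarrow> 0 < t \<Longrightarrow> t < d \<Longrightarrow> P (y,t)"
    using assms unfolding ev_CF by blast
  show ?thesis unfolding eventually_nhds_metric
  proof (intro exI[of _ "d/2"] conjI allI impI)
    show "0 < d/2" using d by simp
    fix y0 assume y0: "dist y0 x < d/2" "same_int_part Iz y0 x"
    show "eventually P (CF Iz y0)" unfolding ev_CF
    proof (intro exI[of _ "d/2"] conjI allI impI)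
      show "0 < d/2" using d by simp
      fix y t assume y: "same_int_part Iz y y0" "dist y y0 < d/2" "0 < t" "t < d/2"
      have "dist y x \<le> dist y y0 + dist y0 x" by (rule dist_triangle)
      then have "dist y x < d" using y(2) y0(1) by simp
      moreover have "same_int_part Iz y x" using same_trans[OF y(1) y0(2)] .
      ultimately show "P (y,t)" using d(2) y(3,4) by simp
    qed
  qed
qed

lemma compact_K: "compact (boxX l u \<inter> intset Iz)"
proof -
  have "boxX l u = cbox l u" by (simp add: boxX_def interval_cart)
  moreover have "intset Iz = (\<Inter>i\<in>Iz. (\<lambda>x. x $ i) -` \<int>)" by (auto simp: intset_def)
  ultimately have "boxX l u \<inter> intset Iz = cbox l u \<inter> (\<Inter>i\<in>Iz. (\<lambda>x. x $ i) -` \<int>)" by simp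
  moreover have "closed (\<Inter>i\<in>Iz. (\<lambda>x::real^'a. x $ i) -` \<int>)"
    by (intro closed_INT ballI closed_vimage_vec_nth closed_Ints)
  ultimately show ?thesis by (simp add: compact_Int_closed)
qed

lemma V_close:
  fixes m :: nat and g :: "nat \<Rightarrow> real^'n::finite \<Rightarrow> real" and L \<rho> :: real
  assumes Lg: "\<forall>i\<in>{1..m}. lipc Iz (g i) L" and "same_int_part Iz z x" "dist z x < \<rho>"
  shows "\<bar>(\<Sum>i=1..m. max 0 (g i z)) - (\<Sum>i=1..m. max 0 (g i x))\<bar> \<le> m * ((\<bar>L\<bar> + 1) * \<rho>)"
proof -
  have "\<bar>(\<Sum>i=1..m. max 0 (g i z)) - (\<Sum>i=1..m. max 0 (g i x))\<bar> = \<bar>\<Sum>i=1..m. max 0 (g i z) - max 0 (g i x)\<bar>"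
    by (simp add: sum_subtractf)
  also have "\<dots> \<le> (\<Sum>i=1..m. \<bar>max 0 (g i z) - max 0 (g i x)\<bar>)" by (rule sum_abs)
  also have "\<dots> \<le> (\<Sum>i=1..m. (\<bar>L\<bar> + 1) * \<rho>)"
  proof (rule sum_mono)
    fix i assume i: "i \<in> {1..m}"
    have "\<bar>g i z - g i x\<bar> < (\<bar>L\<bar> + 1) * \<rho>" using lip_close[of Iz "g i" L z x \<rho>] Lg i assms(2,3) by blast
    moreover have "\<bar>max 0 (g i z) - max 0 (g i x)\<bar> \<le> \<bar>g i z - g i x\<bar>" unfolding max_def by auto
    ultimately show "\<bar>max 0 (g i z) - max 0 (g i x)\<bar> \<le> (\<bar>L\<bar> + 1) * \<rho>" by linarith
  qed
  also have "\<dots> = m * ((\<bar>L\<bar> + 1) * \<rho>)" by (simp add: card_atLeastAtMost)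
  finally show ?thesis .
qed

lemma arith2: "a \<le> b + k \<Longrightarrow> e \<le> c + k \<Longrightarrow> k \<le> (e - b) / 4 \<Longrightarrow> a - c \<le> - ((e - b) / 2)" for a b c e k :: real
  by (simp add: field_simps)

lemma case_ii:
  fixes Iz :: "'n::finite set"
  assumes Lf: "lipc Iz f L" and Lg: "\<forall>i\<in>{1..m}. lipc Iz (g i) L"
    and xK: "x \<in> boxX l u \<inter> intset Iz" and d: "d \<in> Dz Iz l u x"
    and dec: "(\<Sum>i=1..m. max 0 (g i (x + d))) < (\<Sum>i=1..m. max 0 (g i x))"
  shows "\<exists>e0>0. eventually (\<lambda>y. y \<in> boxX l u \<inter> intset Iz \<longrightarrow>
            (\<forall>e. 0 < e \<and> e \<le> e0 \<longrightarrow> \<not> stationary_pen Iz l u f g m e y)) (nhds x)"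
proof -
  define V where "V z = (\<Sum>i=1..m. max 0 (g i z))" for z
  define \<Delta> where "\<Delta> = V x - V (x + d)"
  have D0: "\<Delta> > 0" using dec by (simp add: \<Delta>_def V_def)
  define M where "M = \<bar>L\<bar> + 1"
  have M0: "M > 0" by (simp add: M_def add_pos_nonneg)
  have mM0: "m * M \<ge> 0" using M0 by simp
  define \<rho> where "\<rho> = \<Delta> / (4 * (m * M + 1))"
  have rho0: "\<rho> > 0" using D0 mM0 unfolding \<rho>_def by (intro divide_pos_pos) auto
  have rhoeq: "\<rho> * (4 * (m * M + 1)) = \<Delta>" using mM0 by (simp add: \<rho>_def)
  have mMrho: "m * M * \<rho> \<le> \<Delta> / 4"
  proof -
    have "4 * (m * M * \<rho>) \<le> 4 * (m * M * \<rho>) + 4 * \<rho>" using rho0 by simp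
    also have "\<dots> = \<Delta>" using rhoeq by (simp add: algebra_simps)
    finally show ?thesis by simp
  qed
  define B where "B = \<bar>f (x + d) - f x\<bar> + 2 * M * \<rho>"
  have B0: "B \<ge> 0" using M0 rho0 by (simp add: B_def)
  define e0 where "e0 = \<Delta> / (2 * (B + 1))"
  have e00: "e0 > 0" using D0 B0 unfolding e0_def by (intro divide_pos_pos) auto
  have ev: "eventually (\<lambda>y. dist y x < \<rho> \<and> (y \<in> intset Iz \<longrightarrow> same_int_part Iz y x)) (nhds x)"
    using eventually_conj[OF eventually_nhds_metric[THEN iffD2, OF exI[of _ \<rho>]] ev_same_int[of x Iz]] rho0 xK
    by auto
  have dz: "(\<forall>i. d$i \<in> \<int>) \<and> (\<forall>i\<in>UNIV - Iz. d$i = 0) \<and> primitive_on Iz d \<and> x + d \<in> boxX l u \<inter> intset Iz"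
    using d by (simp add: Dz_def)
  show ?thesis
  proof (intro exI[of _ e0] conjI e00, rule eventually_mono[OF ev], intro impI allI notI)
    fix y e assume y: "dist y x < \<rho> \<and> (y \<in> intset Iz \<longrightarrow> same_int_part Iz y x)" and yK: "y \<in> boxX l u \<inter> intset Iz"
      and e: "0 < e \<and> e \<le> e0" and st: "stationary_pen Iz l u f g m e y"
    have same: "same_int_part Iz y x" using y yK by blast
    have dy: "dist y x < \<rho>" using y by blast
    have same_d: "same_int_part Iz (y + d) (x + d)" using same by (simp add: same_int_part_def)
    have dist_d: "dist (y + d) (x + d) < \<rho>" using dy by (simp add: dist_norm)
    have ydK: "y + d \<in> boxX l u \<inter> intset Iz"
    proof -
      have "l$i \<le> (y + d)$i \<and> (y + d)$i \<le> u$i" for i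
      proof (cases "i \<in> Iz")
        case True
        then have "(y + d)$i = (x + d)$i" using same by (simp add: same_int_part_def)
        then show ?thesis using dz by (simp add: boxX_def)
      next
        case False
        then show ?thesis using dz yK by (simp add: boxX_def)
      qed
      moreover have "(y + d)$i \<in> \<int>" if "i \<in> Iz" for i
      proof -
        have "(y + d)$i = (x + d)$i" using same that by (simp add: same_int_part_def)
        then show ?thesis using dz that xK by (simp add: intset_def)
      qed
      ultimately show ?thesis by (simp add: boxX_def intset_def)
    qed
    have "d \<in> Dz Iz l u y" using dz ydK by (simp add: Dz_def)
    then have "y + d \<in> Bz Iz l u y" by (simp add: Bz_def)
    then have Ple: "penalty f g m e y \<le> penalty f g m e (y + d)" using st by (simp add: stationary_pen_def)
    have f1: "\<bar>f (y + d) - f (x + d)\<bar> < M * \<rho>" using lip_close[OF Lf same_d dist_d] by (simp add: M_def)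
    have f2: "\<bar>f y - f x\<bar> < M * \<rho>" using lip_close[OF Lf same dy] by (simp add: M_def)
    have V1: "\<bar>V (y + d) - V (x + d)\<bar> \<le> m * (M * \<rho>)" using V_close[OF Lg same_d dist_d] by (simp add: V_def M_def)
    have V2: "\<bar>V y - V x\<bar> \<le> m * (M * \<rho>)" using V_close[OF Lg same dy] by (simp add: V_def M_def)
    have fdiff: "f (y + d) - f y \<le> B" using f1 f2 unfolding B_def abs_less_iff by linarith
    have Vdiff: "V (y + d) - V y \<le> - (\<Delta> / 2)"
    proof -
      have a: "V (y + d) \<le> V (x + d) + m * (M * \<rho>)" using V1 by linarith
      have b: "V x \<le> V y + m * (M * \<rho>)" using V2 by linarith
      have c: "m * (M * \<rho>) \<le> \<Delta> / 4" using mMrho by (simp add: mult.assoc)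
      show ?thesis unfolding \<Delta>_def by (rule arith2[OF a b c[unfolded \<Delta>_def]])
    qed
    have e_pos: "e > 0" using e by simp
    have "(B + 1) * e \<le> (B + 1) * e0" using e B0 by (intro mult_left_mono) auto
    also have "\<dots> = \<Delta> / 2" using B0 by (simp add: e0_def field_simps)
    finally have Be: "(B + 1) * e \<le> \<Delta> / 2" .
    have "(1/e) * (V (y + d) - V y) \<le> (1/e) * (- (\<Delta> / 2))" using Vdiff e_pos by (intro mult_left_mono) auto
    also have "\<dots> = - ((\<Delta> / 2) / e)" by simp
    also have "\<dots> \<le> - (B + 1)"
    proof -
      have "B + 1 \<le> (\<Delta> / 2) / e" using Be e_pos by (simp add: pos_le_divide_eq)
      then show ?thesis by simp
    qed
    finally have "(1/e) * (V (y + d) - V y) \<le> - (B + 1)" .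
    moreover have "penalty f g m e (y + d) - penalty f g m e y = (f (y + d) - f y) + (1/e) * (V (y + d) - V y)"
      by (simp add: penalty_def V_def algebra_simps)
    ultimately have "penalty f g m e (y + d) - penalty f g m e y \<le> -1" using fdiff by linarith
    with Ple show False by linarith
  qed
qed

lemma case_i:
  fixes Iz :: "'n::finite set"
  assumes Lf: "lipc Iz f L" and Lg: "\<forall>i\<in>{1..m}. lipc Iz (g i) L"
    and xK: "x \<in> boxX l u \<inter> intset Iz" and sD: "s \<in> Dc Iz l u x"
    and neg: "\<forall>i\<in>{1..m}. g i x \<ge> 0 \<longrightarrow> (\<forall>\<xi>\<in>subdiff_c Iz (g i) x. \<xi> \<bullet> s < 0)"
  shows "\<exists>e0>0. eventually (\<lambda>y. y \<in> boxX l u \<inter> intset Iz \<longrightarrow>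
            (\<forall>e. 0 < e \<and> e \<le> e0 \<longrightarrow> stationary_pen Iz l u f g m e y \<longrightarrow> y \<in> feasF g m)) (nhds x)"
proof -
  have sV: "s \<in> Vc Iz" using sD by (rule Dc_Vc)
  define A where "A = {i\<in>{1..m}. g i x \<ge> 0}"
  have finA: "finite A" by (simp add: A_def)
  have pcneg: "pc Iz (g i) x s < 0" if "i \<in> A" for i
  proof -
    have i: "i \<in> {1..m}" "g i x \<ge> 0" using that by (auto simp: A_def)
    obtain v where v: "v \<in> subdiff_c Iz (g i) x" "inner v s = pc Iz (g i) x s"
      using clarke_support[of Iz "g i" L s x] Lg i sV by blast
    have "v \<bullet> s < 0" using neg i v(1) by blast
    then show ?thesis using v(2) by simp
  qed
  define \<eta> where "\<eta> = Min (insert 1 ((\<lambda>i. - pc Iz (g i) x s / 2) ` A))"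
  have eta0: "\<eta> > 0" unfolding \<eta>_def using finA pcneg by (subst Min_gr_iff) auto
  have etale: "pc Iz (g i) x s < - \<eta>" if "i \<in> A" for i
  proof -
    have "\<eta> \<le> - pc Iz (g i) x s / 2" unfolding \<eta>_def using finA that by (intro Min_le) auto
    then show ?thesis using pcneg[OF that] by linarith
  qed
  have Ea: "eventually (\<lambda>yt. \<forall>i\<in>A. qq (g i) s yt < - \<eta>) (CF Iz x)"
    using finA by (rule eventually_ball_finite) (use Lg sV etale in \<open>auto simp: A_def intro!: pc_ev\<close>)
  have Eb: "eventually (\<lambda>yt. \<forall>i\<in>{1..m} - A. g i (fst yt) < 0 \<and> g i (fst yt + snd yt *\<^sub>R s) < 0) (CF Iz x)"
  proof (rule eventually_ball_finite)
    show "finite ({1..m} - A)" by simp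
    show "\<forall>i\<in>{1..m} - A. eventually (\<lambda>yt. g i (fst yt) < 0 \<and> g i (fst yt + snd yt *\<^sub>R s) < 0) (CF Iz x)"
    proof
      fix i assume i: "i \<in> {1..m} - A"
      then have "g i x < 0" by (auto simp: A_def)
      then show "eventually (\<lambda>yt. g i (fst yt) < 0 \<and> g i (fst yt + snd yt *\<^sub>R s) < 0) (CF Iz x)"
        using ev_sign(1)[of Iz "g i" L s x] Lg i sV by auto
    qed
  qed
  define E where "E yt \<longleftrightarrow> (\<forall>i\<in>A. qq (g i) s yt < - \<eta>) \<and>
      (\<forall>i\<in>{1..m} - A. g i (fst yt) < 0 \<and> g i (fst yt + snd yt *\<^sub>R s) < 0)" for yt
  have EE: "eventually E (CF Iz x)" by (rule eventually_mono[OF eventually_conj[OF Ea Eb]]) (simp add: E_def)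
  define e0 where "e0 = \<eta> / (\<bar>L\<bar> * norm s + 1)"
  have den: "\<bar>L\<bar> * norm s + 1 > 0" by (simp add: add_nonneg_pos)
  have e00: "e0 > 0" using eta0 den by (simp add: e0_def)
  have N: "eventually (\<lambda>y0. (y0 \<in> intset Iz \<longrightarrow> same_int_part Iz y0 x) \<and> s \<in> Dc Iz l u y0 \<and>
      (same_int_part Iz y0 x \<longrightarrow> eventually E (CF Iz y0))) (nhds x)"
    using eventually_conj[OF ev_same_int[of x Iz] eventually_conj[OF ev_Dc[OF sD] ev_CF_shift[OF EE]]] xK
    by simp
  show ?thesis
  proof (intro exI[of _ e0] conjI e00, rule eventually_mono[OF N], intro impI allI)
    fix y0 e
    assume y0: "(y0 \<in> intset Iz \<longrightarrow> same_int_part Iz y0 x) \<and> s \<in> Dc Iz l u y0 \<and>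
      (same_int_part Iz y0 x \<longrightarrow> eventually E (CF Iz y0))"
      and y0K: "y0 \<in> boxX l u \<inter> intset Iz" and e: "0 < e \<and> e \<le> e0"
      and st: "stationary_pen Iz l u f g m e y0"
    show "y0 \<in> feasF g m"
    proof (rule ccontr)
      assume "y0 \<notin> feasF g m"
      then obtain i0 where i0: "i0 \<in> {1..m}" "g i0 y0 > 0" by (auto simp: feasF_def not_le)
      have same: "same_int_part Iz y0 x" using y0 y0K by blast
      have sD0: "s \<in> Dc Iz l u y0" using y0 by blast
      have EE0: "eventually E (CF Iz y0)" using y0 same by blast
      have Pos: "eventually (\<lambda>yt. g i0 (fst yt) > 0 \<and> g i0 (fst yt + snd yt *\<^sub>R s) > 0) (CF Iz y0)"
        using ev_sign(2)[of Iz "g i0" L s y0] Lg i0 sV by auto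
      have Tpos: "eventually (\<lambda>yt. snd yt > 0) (CF Iz y0)"
        using ev_near[OF zero_less_one sV, of y0] by (auto elim!: eventually_mono)
      have e_pos: "e > 0" using e by simp
      have "eventually (\<lambda>yt. qq (penalty f g m e) s yt \<le> -1) (CF Iz y0)"
        using EE0 Pos Tpos
      proof eventually_elim
        case (elim yt)
        obtain y t where yt: "yt = (y,t)" by (cases yt)
        have t: "t > 0" using elim(3) yt by simp
        have Ey: "\<forall>i\<in>A. qq (g i) s (y,t) < - \<eta>" "\<forall>i\<in>{1..m} - A. g i y < 0 \<and> g i (y + t *\<^sub>R s) < 0"
          using elim(1) yt by (auto simp: E_def)
        have gp: "g i0 y > 0" "g i0 (y + t *\<^sub>R s) > 0" using elim(2) yt by auto
        have i0A: "i0 \<in> A"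
        proof (rule ccontr)
          assume "i0 \<notin> A"
          then have "i0 \<in> {1..m} - A" using i0(1) by blast
          then have "g i0 y < 0" using Ey(2) by blast
          then show False using gp(1) by simp
        qed
        have trm: "(max 0 (g i (y + t *\<^sub>R s)) - max 0 (g i y)) / t \<le> (if i = i0 then - \<eta> else 0)"
          if i: "i \<in> {1..m}" for i
        proof (cases "i = i0")
          case True
          have "(max 0 (g i (y + t *\<^sub>R s)) - max 0 (g i y)) / t = qq (g i0) s (y,t)"
            using gp True by simp
          then show ?thesis using Ey(1) i0A True by auto
        next
          case False
          show ?thesis
          proof (cases "i \<in> A")
            case True
            have "(max 0 (g i (y + t *\<^sub>R s)) - max 0 (g i y)) / t \<le> max 0 (qq (g i) s (y,t))"
              using max0_quot[OF t] by simp
            also have "\<dots> = 0" using Ey(1) True eta0 by (auto simp: max_def)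
            finally show ?thesis using False by simp
          next
            case False
            then show ?thesis using Ey(2) i \<open>i \<noteq> i0\<close> by auto
          qed
        qed
        have "(\<Sum>i=1..m. (max 0 (g i (y + t *\<^sub>R s)) - max 0 (g i y)) / t) \<le> (\<Sum>i=1..m. (if i = i0 then - \<eta> else 0))"
          by (rule sum_mono) (rule trm, simp)
        also have "\<dots> = - \<eta>" using i0(1) by simp
        finally have S: "(\<Sum>i=1..m. (max 0 (g i (y + t *\<^sub>R s)) - max 0 (g i y)) / t) \<le> - \<eta>" .
        have fq: "qq f s (y,t) \<le> \<bar>L\<bar> * norm s"
        proof -
          have "qq f s (y,t) \<le> L * norm s" using q_bound2[OF Lf sV t, of y] by simp
          also have "\<dots> \<le> \<bar>L\<bar> * norm s" by (simp add: mult_right_mono)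
          finally show ?thesis .
        qed
        have "(\<bar>L\<bar> * norm s + 1) * e \<le> (\<bar>L\<bar> * norm s + 1) * e0" using e den by (intro mult_left_mono) auto
        also have "\<dots> = \<eta>" using den by (simp add: e0_def)
        finally have "(\<bar>L\<bar> * norm s + 1) \<le> \<eta> / e" using e_pos by (simp add: pos_le_divide_eq)
        moreover have "(1/e) * (\<Sum>i=1..m. (max 0 (g i (y + t *\<^sub>R s)) - max 0 (g i y)) / t) \<le> (1/e) * (- \<eta>)"
          using S e_pos by (intro mult_left_mono) auto
        moreover have "qq (penalty f g m e) s yt = qq f s (y,t) + (1/e) * (\<Sum>i=1..m. (max 0 (g i (y + t *\<^sub>R s)) - max 0 (g i y)) / t)"
          unfolding yt by (rule qq_pen)
        moreover have "(1/e) * (- \<eta>) = - (\<eta> / e)" by simp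
        ultimately show ?case using fq by linarith
      qed
      then have "clarke_jahn Iz l u (penalty f g m e) y0 s \<le> ereal (-1)" by (rule cj_le)
      moreover have "clarke_jahn Iz l u (penalty f g m e) y0 s \<ge> 0" using st sD0 by (simp add: stationary_pen_def)
      ultimately have "(0::ereal) \<le> ereal (-1)" by (rule order_trans[rotated])
      then show False by simp
    qed
  qed
qed

lemma local_all:
  fixes Iz :: "'n::finite set"
  assumes Lf: "lipc Iz f L" and Lg: "\<forall>i\<in>{1..m}. lipc Iz (g i) L"
    and emfcq: "EMFCQ Iz l u g m" and xK: "x \<in> boxX l u \<inter> intset Iz"
  shows "\<exists>e0>0. eventually (\<lambda>y. y \<in> boxX l u \<inter> intset Iz \<longrightarrow>
            (\<forall>e. 0 < e \<and> e \<le> e0 \<longrightarrow> stationary_pen Iz l u f g m e y \<longrightarrow> y \<in> feasF g m)) (nhds x)"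
proof (cases "x \<in> interior (feasF g m)")
  case True
  have "eventually (\<lambda>y. y \<in> interior (feasF g m)) (nhds x)"
    using True by (rule eventually_nhds_in_open[OF open_interior])
  then have "eventually (\<lambda>y. y \<in> boxX l u \<inter> intset Iz \<longrightarrow>
            (\<forall>e. 0 < e \<and> e \<le> 1 \<longrightarrow> stationary_pen Iz l u f g m e y \<longrightarrow> y \<in> feasF g m)) (nhds x)"
    by (rule eventually_mono) (use interior_subset in blast)
  then show ?thesis by (intro exI[of _ 1]) auto
next
  case False
  then have "x \<in> (boxX l u \<inter> intset Iz) - interior (feasF g m)" using xK by blast
  then have "(\<exists>s\<in>Dc Iz l u x. \<forall>i\<in>{1..m}. g i x \<ge> 0 \<longrightarrow> (\<forall>\<xi>\<in>subdiff_c Iz (g i) x. \<xi> \<bullet> s < 0)) \<or>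
        (\<exists>d\<in>Dz Iz l u x. (\<Sum>i=1..m. max 0 (g i (x + d))) < (\<Sum>i=1..m. max 0 (g i x)))"
    using emfcq unfolding EMFCQ_def by blast
  then show ?thesis
  proof
    assume "\<exists>s\<in>Dc Iz l u x. \<forall>i\<in>{1..m}. g i x \<ge> 0 \<longrightarrow> (\<forall>\<xi>\<in>subdiff_c Iz (g i) x. \<xi> \<bullet> s < 0)"
    then obtain s where "s \<in> Dc Iz l u x" "\<forall>i\<in>{1..m}. g i x \<ge> 0 \<longrightarrow> (\<forall>\<xi>\<in>subdiff_c Iz (g i) x. \<xi> \<bullet> s < 0)"
      by blast
    from case_i[OF Lf Lg xK this] show ?thesis .
  next
    assume "\<exists>d\<in>Dz Iz l u x. (\<Sum>i=1..m. max 0 (g i (x + d))) < (\<Sum>i=1..m. max 0 (g i x))"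
    then obtain d where "d \<in> Dz Iz l u x" "(\<Sum>i=1..m. max 0 (g i (x + d))) < (\<Sum>i=1..m. max 0 (g i x))"
      by blast
    from case_ii[OF Lf Lg xK this] obtain e0 where "e0 > 0" "eventually (\<lambda>y. y \<in> boxX l u \<inter> intset Iz \<longrightarrow>
            (\<forall>e. 0 < e \<and> e \<le> e0 \<longrightarrow> \<not> stationary_pen Iz l u f g m e y)) (nhds x)"
      by blast
    then show ?thesis by (intro exI[of _ e0]) (auto elim!: eventually_mono)
  qed
qed

theorem mainTheorem10:
  fixes Iz :: "'n::finite set" and l u :: "real^'n"
    and f :: "real^'n \<Rightarrow> real" and g :: "nat \<Rightarrow> real^'n \<Rightarrow> real" and m :: nat and L :: real
  assumes lu: "\<forall>i. l$i < u$i"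
    and lu_int: "\<forall>i\<in>Iz. l$i \<in> \<int> \<and> u$i \<in> \<int>"
    and lip_f: "\<forall>x y. same_int_part Iz x y \<longrightarrow> \<bar>f x - f y\<bar> \<le> L * norm (x - y)"
    and lip_g: "\<forall>i\<in>{1..m}. \<forall>x y. same_int_part Iz x y \<longrightarrow> \<bar>g i x - g i y\<bar> \<le> L * norm (x - y)"
    and emfcq: "EMFCQ Iz l u g m"
  shows "\<exists>\<epsilon>s>0. \<forall>\<epsilon>. 0 < \<epsilon> \<and> \<epsilon> \<le> \<epsilon>s \<longrightarrow>
           (\<forall>x. stationary_pen Iz l u f g m \<epsilon> x \<longrightarrow> kkt_point Iz l u f g m x)"
proof -
  define K where "K = boxX l u \<inter> intset Iz"
  have Lf: "lipc Iz f L" using lip_f by (simp add: lipc_def)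
  have Lg: "\<forall>i\<in>{1..m}. lipc Iz (g i) L" using lip_g by (simp add: lipc_def)
  define Q where "Q e0 y \<longleftrightarrow> (y \<in> K \<longrightarrow> (\<forall>e. 0 < e \<and> e \<le> e0 \<longrightarrow> stationary_pen Iz l u f g m e y \<longrightarrow> y \<in> feasF g m))"
    for e0 y
  have "\<forall>x\<in>K. \<exists>p. fst p > 0 \<and> open (snd p) \<and> x \<in> snd p \<and> (\<forall>y\<in>snd p. Q (fst p) y)"
  proof
    fix x assume "x \<in> K"
    then obtain e0 where e0: "e0 > 0" "eventually (Q e0) (nhds x)"
      using local_all[OF Lf Lg emfcq, of x] unfolding K_def Q_def by blast
    then obtain U where "open U" "x \<in> U" "\<forall>y\<in>U. Q e0 y" unfolding eventually_nhds by blast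
    then show "\<exists>p. fst p > 0 \<and> open (snd p) \<and> x \<in> snd p \<and> (\<forall>y\<in>snd p. Q (fst p) y)"
      using e0 by (intro exI[of _ "(e0, U)"]) auto
  qed
  then obtain P where P: "\<forall>x\<in>K. fst (P x) > 0 \<and> open (snd (P x)) \<and> x \<in> snd (P x) \<and> (\<forall>y\<in>snd (P x). Q (fst (P x)) y)"
    by metis
  obtain C where C: "C \<subseteq> K" "finite C" "K \<subseteq> (\<Union>c\<in>C. snd (P c))"
    using compactE_image[OF compact_K[of l u Iz], of K "\<lambda>c. snd (P c)"] P unfolding K_def by blast
  define es where "es = Min (insert 1 ((\<lambda>c. fst (P c)) ` C))"
  have es0: "es > 0" unfolding es_def using C P by (subst Min_gr_iff) auto
  show ?thesis
  proof (intro exI[of _ es] conjI es0 allI impI)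
    fix e x assume e: "0 < e \<and> e \<le> es" and st: "stationary_pen Iz l u f g m e x"
    have xK: "x \<in> K" using st by (simp add: stationary_pen_def K_def)
    then obtain c where c: "c \<in> C" "x \<in> snd (P c)" using C by blast
    have "es \<le> fst (P c)" unfolding es_def using C c by (intro Min_le) auto
    moreover have "Q (fst (P c)) x" using P C c by blast
    ultimately have "x \<in> feasF g m" using xK e st unfolding Q_def by auto
    then show "kkt_point Iz l u f g m x" using feasible_kkt[OF Lf Lg _ st] e by simp
  qed
qed

end
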